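(* Let $a_1,a_2,a_3,b_1,b_2,b_3$ be real numbers and let $\{T(n,k)\}_{n,k\ge 0}$ be an array of nonnegative real numbers with $T(0,0)\ge0$, $T(n,k)=0$ unless $0\le k\le n$, satisfying for $n\ge 1$ $$T(n,k)=(a_1n+a_2k+a_3)T(n-1,k)+(b_1n+b_2k+b_3)T(n-1,k-1),$$ where $a_1n+a_2k+a_3\ge 0$ whenever $0\le k<n$ and $b_1n+b_2k+b_3\ge 0$ whenever $0<k\le n$. Suppose moreover that $$(a_2b_1-a_1b_2)n+a_2b_2k+(a_2b_3-a_3b_2)\ge 0\quad\text{for all } n\ge 1,\ 0<k\le n.$$ Let $T_n(q)=\sum_{k=0}^nT(n,k)q^k$. Then the sequence $\{T_n(q)\}_{n\ge 0}$ is $q$-log-convex.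
   Context: For real polynomials $f(q),g(q)$ write $f(q)\le_q g(q)$ if $g(q)-f(q)$ has nonnegative coefficients. A sequence of real polynomials $\{P_n(q)\}_{n\ge0}$ is $q$-log-convex if $P_n(q)^2\le_q P_{n-1}(q)P_{n+1}(q)$ for all $n\ge 1$. *)

theory Defs
  imports "HOL-Computational_Algebra.Polynomial"
begin

definition q_le :: "real poly \<Rightarrow> real poly \<Rightarrow> bool" where
  "q_le f g \<longleftrightarrow> (\<forall>i. coeff (g - f) i \<ge> 0)"

definition q_log_convex :: "(nat \<Rightarrow> real poly) \<Rightarrow> bool" where
  "q_log_convex P \<longleftrightarrow> (\<forall>n\<ge>1. q_le ((P n)\<^sup>2) (P (n - 1) * P (n + 1)))"

definition row_poly :: "(nat \<Rightarrow> int \<Rightarrow> real) \<Rightarrow> nat \<Rightarrow> real poly" where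
  "row_poly T n = (\<Sum>k\<le>n. monom (T n (int k)) k)"

end

theory Submission
  imports Defs
begin

definition LA :: "real \<Rightarrow> real \<Rightarrow> real \<Rightarrow> nat \<Rightarrow> int \<Rightarrow> real" where
  "LA u1 u2 u3 n k = u1 * real n + u2 * real_of_int k + u3"

lemma LA_plus1: "LA u1 u2 u3 n (k+1) = LA u1 u2 u3 n k + u2"
  by (simp add: LA_def algebra_simps)
lemma LA_plus2: "LA u1 u2 u3 n (k+2) = LA u1 u2 u3 n k + 2*u2"
  by (simp add: LA_def algebra_simps)
lemma LA_minus1: "LA u1 u2 u3 n (k-1) = LA u1 u2 u3 n k - u2"
  by (simp add: LA_def algebra_simps)
lemma LA_Suc: "LA u1 u2 u3 (Suc n) k = LA u1 u2 u3 n k + u1"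
  by (simp add: LA_def algebra_simps)

lemma core1:
  fixes a b x1 x2 y1 y2 q0 q1 q2 q3 :: real
  shows "q2 * (((a*q2 + b*q1)) * ((a+x1+x2)*((a+x2)*q3 + (b+y2)*q2) + (b+y1+y2)*(a*q2 + b*q1))
             - ((a+x2)*q3 + (b+y2)*q2) * ((a+x1)*(a*q2 + b*q1) + (b+y1)*((a-x2)*q1 + (b-y2)*q0)))
   = (a+x2) * (a*q2 + b*q1) * (q2 * ((a+x2)*q3 + (b+y2)*q2) - q3 * (a*q2 + b*q1))
   + (b+y1) * ((a+x2)*q3 + (b+y2)*q2) * (q1 * (a*q2 + b*q1) - q2 * ((a-x2)*q1 + (b-y2)*q0))
   + y1 * (a*q2 + b*q1) * (q2 * (a*q2 + b*q1) - q1 * ((a+x2)*q3 + (b+y2)*q2))"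
  by algebra

lemma ident1:
  fixes p t s :: "int \<Rightarrow> real"
  assumes ht: "\<And>k. t k = LA x1 x2 x3 n k * p k + LA y1 y2 y3 n k * p (k-1)"
    and hs: "\<And>k. s k = LA x1 x2 x3 (Suc n) k * t k + LA y1 y2 y3 (Suc n) k * t (k-1)"
  shows "p k * (t k * s (k+1) - t (k+1) * s k)
   = LA x1 x2 x3 n (k+1) * t k * (p k * t (k+1) - p (k+1) * t k)
   + LA y1 y2 y3 (Suc n) k * t (k+1) * (p (k-1) * t k - p k * t (k-1))
   + y1 * t k * (p k * t k - p (k-1) * t (k+1))"
proof -
  define a where "a = LA x1 x2 x3 n k"
  define b where "b = LA y1 y2 y3 n k"
  have t1: "t (k+1) = (a+x2) * p (k+1) + (b+y2) * p k"
    using ht[of "k+1"] by (simp add: a_def b_def LA_plus1)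
  have t0: "t k = a * p k + b * p (k-1)" using ht[of k] by (simp add: a_def b_def)
  have tm: "t (k-1) = (a-x2) * p (k-1) + (b-y2) * p (k-1-1)"
    using ht[of "k-1"] by (simp add: a_def b_def LA_minus1)
  have s1: "s (k+1) = (a+x1+x2) * t (k+1) + (b+y1+y2) * t k"
    using hs[of "k+1"] by (simp only: a_def b_def LA_plus1 LA_Suc add_diff_cancel_right' add.assoc)
  have s0: "s k = (a+x1) * t k + (b+y1) * t (k-1)"
    using hs[of k] by (simp add: a_def b_def LA_Suc)
  have c1: "LA x1 x2 x3 n (k+1) = a + x2" by (simp add: a_def LA_plus1)
  have c2: "LA y1 y2 y3 (Suc n) k = b + y1" by (simp add: b_def LA_Suc)
  show ?thesis unfolding c1 c2 s1 s0 unfolding t1 t0 tm using core1 by simp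
qed

lemma core2:
  fixes a b x1 x2 y1 y2 q0 q1 q2 q3 :: real
  shows "q1 * (((a+x2)*q2 + (b+y2)*q1) * ((a+x1+x2)*((a+x2)*q2 + (b+y2)*q1) + (b+y1+y2)*(a*q1 + b*q0))
            - (a*q1 + b*q0) * ((a+x1+2*x2)*((a+2*x2)*q3 + (b+2*y2)*q2) + (b+y1+2*y2)*((a+x2)*q2 + (b+y2)*q1)))
   = b * ((a+x2)*q2 + (b+y2)*q1) * (q1 * (a*q1 + b*q0) - q0 * ((a+x2)*q2 + (b+y2)*q1))
   + (a+x1+2*x2) * (a*q1 + b*q0) * (q2 * ((a+x2)*q2 + (b+y2)*q1) - q1 * ((a+2*x2)*q3 + (b+2*y2)*q2))
   + (x1+x2) * ((a+x2)*q2 + (b+y2)*q1) * (q1 * ((a+x2)*q2 + (b+y2)*q1) - q2 * (a*q1 + b*q0))"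
  by algebra

lemma ident2:
  fixes p t s :: "int \<Rightarrow> real"
  assumes ht: "\<And>k. t k = LA x1 x2 x3 n k * p k + LA y1 y2 y3 n k * p (k-1)"
    and hs: "\<And>k. s k = LA x1 x2 x3 (Suc n) k * t k + LA y1 y2 y3 (Suc n) k * t (k-1)"
  shows "p k * (t (k+1) * s (k+1) - t k * s (k+2))
   = LA y1 y2 y3 n k * t (k+1) * (p k * t k - p (k-1) * t (k+1))
   + LA x1 x2 x3 (Suc n) (k+2) * t k * (p (k+1) * t (k+1) - p k * t (k+2))
   + (x1+x2) * t (k+1) * (p k * t (k+1) - p (k+1) * t k)"
proof -
  define a where "a = LA x1 x2 x3 n k"
  define b where "b = LA y1 y2 y3 n k"
  have t2: "t (k+2) = (a+2*x2) * p (k+2) + (b+2*y2) * p (k+1)"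
  proof -
    have "t (k+2) = LA x1 x2 x3 n (k+2) * p (k+2) + LA y1 y2 y3 n (k+2) * p (k+2-1)" using ht .
    moreover have "k+2-1 = k+1" by simp
    ultimately show ?thesis by (simp only: a_def b_def LA_plus2)
  qed
  have t1: "t (k+1) = (a+x2) * p (k+1) + (b+y2) * p k"
    using ht[of "k+1"] by (simp add: a_def b_def LA_plus1)
  have t0: "t k = a * p k + b * p (k-1)" using ht[of k] by (simp add: a_def b_def)
  have s2: "s (k+2) = (a+x1+2*x2) * t (k+2) + (b+y1+2*y2) * t (k+1)"
  proof -
    have "s (k+2) = LA x1 x2 x3 (Suc n) (k+2) * t (k+2) + LA y1 y2 y3 (Suc n) (k+2) * t (k+2-1)" using hs .
    moreover have "k+2-1 = k+1" by simp
    ultimately show ?thesis by (simp only: a_def b_def LA_plus2 LA_Suc add.assoc add.commute add.left_commute)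
  qed
  have s1: "s (k+1) = (a+x1+x2) * t (k+1) + (b+y1+y2) * t k"
    using hs[of "k+1"] by (simp only: a_def b_def LA_plus1 LA_Suc add_diff_cancel_right' add.assoc)
  have c1: "LA x1 x2 x3 (Suc n) (k+2) = a + x1 + 2*x2" by (simp add: a_def LA_plus2 LA_Suc)
  have c2: "LA y1 y2 y3 n k = b" by (simp add: b_def)
  show ?thesis unfolding c1 c2 s1 s2 unfolding t2 t1 t0 using core2 by simp
qed

lemma core3:
  fixes a b x1 x2 y1 y2 q0 q1 q2 :: real
  shows "q2 * ((a*q2 + b*q1) * ((a+x1+x2)*((b+y2)*q2) + (b+y1+y2)*(a*q2 + b*q1))
             - ((b+y2)*q2) * ((a+x1)*(a*q2 + b*q1) + (b+y1)*((a-x2)*q1 + (b-y2)*q0)))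
   = (b+y1) * ((b+y2)*q2) * (q1 * (a*q2 + b*q1) - q2 * ((a-x2)*q1 + (b-y2)*q0))
   + (a*q2 + b*q1) * q2 * ((x2*(b+y2) + (b+y1+y2)*a) * q2 - y1*y2*q1)"
  by algebra

lemma ident3:
  fixes p t s :: "int \<Rightarrow> real"
  assumes ht: "\<And>k. t k = LA x1 x2 x3 n k * p k + LA y1 y2 y3 n k * p (k-1)"
    and hs: "\<And>k. s k = LA x1 x2 x3 (Suc n) k * t k + LA y1 y2 y3 (Suc n) k * t (k-1)"
    and hp: "p (k+1) = 0"
  shows "p k * (t k * s (k+1) - t (k+1) * s k)
   = LA y1 y2 y3 (Suc n) k * t (k+1) * (p (k-1) * t k - p k * t (k-1))
   + t k * p k * ((x2 * LA y1 y2 y3 n (k+1) + LA y1 y2 y3 (Suc n) (k+1) * LA x1 x2 x3 n k) * p k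
        - y1 * y2 * p (k-1))"
proof -
  define a where "a = LA x1 x2 x3 n k"
  define b where "b = LA y1 y2 y3 n k"
  have t1: "t (k+1) = (b+y2) * p k"
    using ht[of "k+1"] hp by (simp add: a_def b_def LA_plus1)
  have t0: "t k = a * p k + b * p (k-1)" using ht[of k] by (simp add: a_def b_def)
  have tm: "t (k-1) = (a-x2) * p (k-1) + (b-y2) * p (k-1-1)"
    using ht[of "k-1"] by (simp add: a_def b_def LA_minus1)
  have s1: "s (k+1) = (a+x1+x2) * t (k+1) + (b+y1+y2) * t k"
    using hs[of "k+1"] by (simp only: a_def b_def LA_plus1 LA_Suc add_diff_cancel_right' add.assoc)
  have s0: "s k = (a+x1) * t k + (b+y1) * t (k-1)"
    using hs[of k] by (simp add: a_def b_def LA_Suc)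
  have c1: "LA y1 y2 y3 n (k+1) = b + y2" by (simp add: b_def LA_plus1)
  have c2: "LA y1 y2 y3 (Suc n) k = b + y1" by (simp add: b_def LA_Suc)
  have c3: "LA y1 y2 y3 (Suc n) (k+1) = b + y1 + y2" by (simp add: b_def LA_Suc LA_plus1)
  have c4: "LA x1 x2 x3 n k = a" by (simp add: a_def)
  show ?thesis unfolding c1 c2 c3 c4 s1 s0 unfolding t1 t0 tm using core3 by simp
qed

lemma core4:
  fixes a b x1 x2 y1 y2 q1 q2 q3 :: real
  shows "q1 * (((a+x2)*q2 + (b+y2)*q1) * ((a+x1+x2)*((a+x2)*q2 + (b+y2)*q1) + (b+y1+y2)*(a*q1))
            - (a*q1) * ((a+x1+2*x2)*((a+2*x2)*q3 + (b+2*y2)*q2) + (b+y1+2*y2)*((a+x2)*q2 + (b+y2)*q1)))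
   = (a+x1+2*x2) * (a*q1) * (q2 * ((a+x2)*q2 + (b+y2)*q1) - q1 * ((a+2*x2)*q3 + (b+2*y2)*q2))
   + ((a+x2)*q2 + (b+y2)*q1) * q1 * ((- y2 * a + (a+x1+x2) * (b+y2)) * q1 + (x1+x2)*x2*q2)"
  by algebra

lemma ident4:
  fixes p t s :: "int \<Rightarrow> real"
  assumes ht: "\<And>k. t k = LA x1 x2 x3 n k * p k + LA y1 y2 y3 n k * p (k-1)"
    and hs: "\<And>k. s k = LA x1 x2 x3 (Suc n) k * t k + LA y1 y2 y3 (Suc n) k * t (k-1)"
    and hp: "p (k-1) = 0"
  shows "p k * (t (k+1) * s (k+1) - t k * s (k+2))
   = LA x1 x2 x3 (Suc n) (k+2) * t k * (p (k+1) * t (k+1) - p k * t (k+2))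
   + t (k+1) * p k * ((- y2 * LA x1 x2 x3 n k + LA x1 x2 x3 (Suc n) (k+1) * LA y1 y2 y3 n (k+1)) * p k
        + (x1+x2) * x2 * p (k+1))"
proof -
  define a where "a = LA x1 x2 x3 n k"
  define b where "b = LA y1 y2 y3 n k"
  have t2: "t (k+2) = (a+2*x2) * p (k+2) + (b+2*y2) * p (k+1)"
  proof -
    have "t (k+2) = LA x1 x2 x3 n (k+2) * p (k+2) + LA y1 y2 y3 n (k+2) * p (k+2-1)" using ht .
    moreover have "k+2-1 = k+1" by simp
    ultimately show ?thesis by (simp only: a_def b_def LA_plus2)
  qed
  have t1: "t (k+1) = (a+x2) * p (k+1) + (b+y2) * p k"
    using ht[of "k+1"] by (simp add: a_def b_def LA_plus1)
  have t0: "t k = a * p k" using ht[of k] hp by (simp add: a_def b_def)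
  have s2: "s (k+2) = (a+x1+2*x2) * t (k+2) + (b+y1+2*y2) * t (k+1)"
  proof -
    have "s (k+2) = LA x1 x2 x3 (Suc n) (k+2) * t (k+2) + LA y1 y2 y3 (Suc n) (k+2) * t (k+2-1)" using hs .
    moreover have "k+2-1 = k+1" by simp
    ultimately show ?thesis by (simp only: a_def b_def LA_plus2 LA_Suc add.assoc add.commute add.left_commute)
  qed
  have s1: "s (k+1) = (a+x1+x2) * t (k+1) + (b+y1+y2) * t k"
    using hs[of "k+1"] by (simp only: a_def b_def LA_plus1 LA_Suc add_diff_cancel_right' add.assoc)
  have c1: "LA x1 x2 x3 (Suc n) (k+2) = a + x1 + 2*x2" by (simp add: a_def LA_plus2 LA_Suc)
  have c2: "LA x1 x2 x3 n k = a" by (simp add: a_def)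
  have c3: "LA x1 x2 x3 (Suc n) (k+1) = a + x1 + x2" by (simp add: a_def LA_Suc LA_plus1)
  have c4: "LA y1 y2 y3 n (k+1) = b + y2" by (simp add: b_def LA_plus1)
  show ?thesis unfolding c1 c2 c3 c4 s1 s2 unfolding t2 t1 t0 using core4 by simp
qed

lemma chain_mono:
  fixes f :: "int \<Rightarrow> real"
  assumes st: "\<And>k. a \<le> k \<Longrightarrow> k + 1 \<le> b \<Longrightarrow> f k \<le> f (k+1)"
    and aI: "a \<le> I" and IJ: "I \<le> J" and Jb: "J \<le> b"
  shows "f I \<le> f J"
proof -
  have "J \<le> b \<longrightarrow> f I \<le> f J"
    using IJ
  proof (induction J rule: int_ge_induct)
    case base
    then show ?case by simp
  next
    case (step i)
    show ?case
    proof
      assume "i + 1 \<le> b"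
      then have "f I \<le> f i" using step by simp
      also have "f i \<le> f (i+1)" using st[of i] aI step(1) \<open>i + 1 \<le> b\<close> by simp
      finally show "f I \<le> f (i+1)" .
    qed
  qed
  then show ?thesis using Jb by simp
qed

lemma mult_pos_nonneg_cancel:
  fixes x y r :: real
  assumes "x * y = r" "r \<ge> 0" "x > 0"
  shows "y \<ge> 0"
  using assms by (metis zero_le_mult_iff not_less)

lemma strict_TP:
  fixes S :: "nat \<Rightarrow> int \<Rightarrow> real" and x1 x2 x3 y1 y2 y3 c :: real
  assumes c: "c > 0"
    and base: "\<And>k. S 0 k = (if k = 0 then c else 0)"
    and rec: "\<And>n k. S (Suc n) k = LA x1 x2 x3 (Suc n) k * S n k + LA y1 y2 y3 (Suc n) k * S n (k-1)"
    and HA: "\<And>n k. 0 \<le> k \<Longrightarrow> k < int n \<Longrightarrow> LA x1 x2 x3 n k > 0"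
    and HB: "\<And>n k. 0 < k \<Longrightarrow> k \<le> int n \<Longrightarrow> LA y1 y2 y3 n k > 0"
    and hx1: "x1 \<ge> 0" and hy1: "y1 \<ge> 0" and hx12: "x1 + x2 \<ge> 0" and hy12: "y1 + y2 \<ge> 0"
    and sgn: "\<not> (x2 < 0 \<and> y2 > 0)"
    and cond: "\<And>n. n \<ge> 1 \<Longrightarrow> x2 * LA y1 y2 y3 n 1 - y2 * LA x1 x2 x3 n 0 \<ge> 0"
    and IJ: "I < J"
  shows "S m I * S (Suc m) J \<ge> S m J * S (Suc m) I \<and> S m J * S (Suc m) (I+1) \<ge> S m I * S (Suc m) (J+1)"
proof -
  have supp: "S n k = 0" if "k < 0 \<or> k > int n" for n k
    using that
  proof (induction n arbitrary: k)
    case 0 then show ?case by (auto simp: base)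
  next
    case (Suc n)
    have "S n k = 0" using Suc by auto
    moreover have "S n (k-1) = 0" using Suc by auto
    ultimately show ?case by (simp add: rec)
  qed
  have pos: "S n k > 0" if "0 \<le> k" "k \<le> int n" for n k
    using that
  proof (induction n arbitrary: k)
    case 0 then show ?case by (simp add: base c)
  next
    case (Suc n)
    show ?case
    proof (cases "k = int (Suc n)")
      case True
      have "S n k = 0" using True supp by simp
      moreover have "S n (k-1) > 0" using Suc.IH True by simp
      moreover have "LA y1 y2 y3 (Suc n) k > 0" using HB True by simp
      ultimately show ?thesis by (simp add: rec)
    next
      case False
      then have kn: "k \<le> int n" using Suc.prems by simp
      have a: "LA x1 x2 x3 (Suc n) k * S n k > 0"
        using HA[of k "Suc n"] Suc.IH[of k] Suc.prems kn by simp
      have b: "LA y1 y2 y3 (Suc n) k * S n (k-1) \<ge> 0"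
      proof (cases "k = 0")
        case True then show ?thesis using supp[of "k-1" n] by simp
      next
        case False
        then show ?thesis using HB[of k "Suc n"] Suc.IH[of "k-1"] Suc.prems kn
          by (simp add: less_imp_le)
      qed
      show ?thesis using a b by (simp add: rec)
    qed
  qed
  have nn: "S n k \<ge> 0" for n k
    using supp[of k n] pos[of k n] by (cases "k < 0 \<or> k > int n") auto
  define Phi where "Phi m k = S m k * S (Suc m) (k+1) - S m (k+1) * S (Suc m) k" for m k
  define Xi where "Xi m k = S m (k+1) * S (Suc m) (k+1) - S m k * S (Suc m) (k+2)" for m k
  have cons: "\<forall>k. 0 \<le> k \<longrightarrow> k + 1 \<le> int m \<longrightarrow> Phi m k \<ge> 0 \<and> Xi m k \<ge> 0" for m
  proof (induction m)
    case 0 then show ?case by simp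
  next
    case (Suc m)
    define n where "n = Suc m"
    define p where "p = S m"
    define t where "t = S (Suc m)"
    define s where "s = S (Suc (Suc m))"
    have ht: "\<And>k. t k = LA x1 x2 x3 n k * p k + LA y1 y2 y3 n k * p (k-1)"
      by (simp add: t_def p_def n_def rec)
    have hs: "\<And>k. s k = LA x1 x2 x3 (Suc n) k * t k + LA y1 y2 y3 (Suc n) k * t (k-1)"
      by (simp add: t_def s_def n_def rec)
    have pn: "p k \<ge> 0" "t k \<ge> 0" for k by (simp_all add: p_def t_def nn)
    have F1: "p (k-1) * t k - p k * t (k-1) \<ge> 0" if "0 \<le> k" "k \<le> int m" for k
    proof (cases "k = 0")
      case True then show ?thesis by (simp add: p_def t_def supp)
    next
      case False
      then show ?thesis using Suc.IH that unfolding Phi_def p_def t_def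
        by (metis add.commute diff_add_cancel int_one_le_iff_zero_less le_less zle_diff1_eq)
    qed
    have F2: "p k * t k - p (k-1) * t (k+1) \<ge> 0" if "0 \<le> k" "k \<le> int m" for k
    proof (cases "k = 0")
      case True then show ?thesis by (simp add: p_def t_def supp nn)
    next
      case False
      then have "Xi m (k-1) \<ge> 0" using Suc.IH that by simp
      then show ?thesis unfolding Xi_def p_def t_def by (simp add: algebra_simps)
    qed
    have F3: "p k * t (k+1) - p (k+1) * t k \<ge> 0" if "0 \<le> k" "k \<le> int m" for k
    proof (cases "k = int m")
      case True then show ?thesis using pn by (simp add: p_def t_def supp)
    next
      case False
      then have "Phi m k \<ge> 0" using Suc.IH that by simp
      then show ?thesis unfolding Phi_def p_def t_def by simp
    qed
    have F4m: "p (int m + 1) * t (int m + 1) - p (int m) * t (int m + 2) = 0"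
      by (simp add: p_def t_def supp)
    have F4: "p (k+1) * t (k+1) - p k * t (k+2) \<ge> 0" if "0 \<le> k" "k \<le> int m" for k
    proof (cases "k = int m")
      case True then show ?thesis using F4m by simp
    next
      case False
      then have "Xi m k \<ge> 0" using Suc.IH that by simp
      then show ?thesis unfolding Xi_def p_def t_def by simp
    qed
    have ppos: "p k > 0" if "0 \<le> k" "k \<le> int m" for k using pos that by (simp add: p_def)
    have condn: "x2 * LA y1 y2 y3 n 1 - y2 * LA x1 x2 x3 n 0 \<ge> 0" using cond by (simp add: n_def)
    have C1: "t k * s (k+1) - t (k+1) * s k \<ge> 0" if k0: "0 \<le> k" and km: "k \<le> int m" for k
    proof (cases "k < int m \<or> x2 \<ge> 0")
      case True
      have A: "LA x1 x2 x3 n (k+1) \<ge> 0"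
      proof (cases "k < int m")
        case True then show ?thesis using HA[of "k+1" n] k0 by (simp add: n_def)
      next
        case False
        then have "x2 \<ge> 0" "k = int m" using \<open>k < int m \<or> x2 \<ge> 0\<close> km by auto
        moreover have "LA x1 x2 x3 n k > 0" using HA[of k n] k0 \<open>k = int m\<close> by (simp add: n_def)
        ultimately show ?thesis by (simp add: LA_plus1)
      qed
      have B: "LA y1 y2 y3 (Suc n) k * t (k+1) * (p (k-1) * t k - p k * t (k-1)) \<ge> 0"
      proof (cases "k = 0")
        case True then show ?thesis by (simp add: p_def t_def supp)
      next
        case False
        then have "LA y1 y2 y3 (Suc n) k > 0" using HB[of k "Suc n"] k0 km by (simp add: n_def)
        then show ?thesis using F1[OF k0 km] pn by simp
      qed
      have R: "LA x1 x2 x3 n (k+1) * t k * (p k * t (k+1) - p (k+1) * t k)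
          + LA y1 y2 y3 (Suc n) k * t (k+1) * (p (k-1) * t k - p k * t (k-1))
          + y1 * t k * (p k * t k - p (k-1) * t (k+1)) \<ge> 0"
        using A B F3[OF k0 km] F2[OF k0 km] pn hy1 by (simp add: add_nonneg_nonneg)
      show ?thesis
        using mult_pos_nonneg_cancel[OF ident1[OF ht hs, of k] R ppos[OF k0 km]] .
    next
      case False
      then have km': "k = int m" and x2n: "x2 < 0" using km by auto
      then have y2n: "y2 \<le> 0" using sgn by auto
      have hp: "p (k+1) = 0" using km' by (simp add: p_def supp)
      have B: "LA y1 y2 y3 (Suc n) k * t (k+1) * (p (k-1) * t k - p k * t (k-1)) \<ge> 0"
      proof (cases "k = 0")
        case True then show ?thesis by (simp add: p_def t_def supp)
      next
        case False
        then have "LA y1 y2 y3 (Suc n) k > 0" using HB[of k "Suc n"] k0 km by (simp add: n_def)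
        then show ?thesis using F1[OF k0 km] pn by simp
      qed
      have coef: "x2 * LA y1 y2 y3 n (k+1) + LA y1 y2 y3 (Suc n) (k+1) * LA x1 x2 x3 n k
          = (x2 * LA y1 y2 y3 n 1 - y2 * LA x1 x2 x3 n 0) + LA y1 y2 y3 (Suc n) (k+2) * LA x1 x2 x3 n k"
        using km' unfolding LA_def n_def by (simp add: algebra_simps)
      have "LA y1 y2 y3 (Suc n) (k+2) > 0" using HB[of "k+2" "Suc n"] k0 km' by (simp add: n_def)
      moreover have "LA x1 x2 x3 n k > 0" using HA[of k n] k0 km' by (simp add: n_def)
      ultimately have coefpos: "x2 * LA y1 y2 y3 n (k+1) + LA y1 y2 y3 (Suc n) (k+1) * LA x1 x2 x3 n k \<ge> 0"
        using coef condn by (simp add: add_nonneg_nonneg)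
      have "- y1 * y2 * p (k-1) \<ge> 0"
        using mult_nonpos_nonneg[OF mult_nonneg_nonpos[OF hy1 y2n] pn(1)[of "k-1"]] by simp
      then have "(x2 * LA y1 y2 y3 n (k+1) + LA y1 y2 y3 (Suc n) (k+1) * LA x1 x2 x3 n k) * p k
        - y1 * y2 * p (k-1) \<ge> 0" using coefpos pn(1)[of k] mult_nonneg_nonneg[OF coefpos pn(1)[of k]] by linarith
      then have R: "LA y1 y2 y3 (Suc n) k * t (k+1) * (p (k-1) * t k - p k * t (k-1))
        + t k * p k * ((x2 * LA y1 y2 y3 n (k+1) + LA y1 y2 y3 (Suc n) (k+1) * LA x1 x2 x3 n k) * p k
        - y1 * y2 * p (k-1)) \<ge> 0" using B pn by simp
      show ?thesis
        using mult_pos_nonneg_cancel[OF ident3[OF ht hs hp] R ppos[OF k0 km]] .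
    qed
    have C2: "t (k+1) * s (k+1) - t k * s (k+2) \<ge> 0" if k0: "0 \<le> k" and km: "k \<le> int m" for k
    proof (cases "k \<ge> 1 \<or> y2 \<le> 0")
      case True
      have B: "LA y1 y2 y3 n k \<ge> 0"
      proof (cases "k \<ge> 1")
        case True then show ?thesis using HB[of k n] km by (simp add: n_def)
      next
        case False
        then have "k = 0" "y2 \<le> 0" using k0 \<open>k \<ge> 1 \<or> y2 \<le> 0\<close> by auto
        moreover have "LA y1 y2 y3 n 1 > 0" using HB[of 1 n] by (simp add: n_def)
        ultimately show ?thesis by (simp add: LA_def algebra_simps)
      qed
      have A: "LA x1 x2 x3 (Suc n) (k+2) * t k * (p (k+1) * t (k+1) - p k * t (k+2)) \<ge> 0"
      proof (cases "k = int m")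
        case True then show ?thesis using F4m by simp
      next
        case False
        then have "LA x1 x2 x3 (Suc n) (k+2) > 0" using HA[of "k+2" "Suc n"] k0 km by (simp add: n_def)
        then show ?thesis using F4[OF k0 km] pn by simp
      qed
      have R: "LA y1 y2 y3 n k * t (k+1) * (p k * t k - p (k-1) * t (k+1))
        + LA x1 x2 x3 (Suc n) (k+2) * t k * (p (k+1) * t (k+1) - p k * t (k+2))
        + (x1+x2) * t (k+1) * (p k * t (k+1) - p (k+1) * t k) \<ge> 0"
        using A B F2[OF k0 km] F3[OF k0 km] pn hx12 by (simp add: add_nonneg_nonneg)
      show ?thesis
        using mult_pos_nonneg_cancel[OF ident2[OF ht hs, of k] R ppos[OF k0 km]] .
    next
      case False
      then have k0': "k = 0" and y2p: "y2 > 0" using k0 by auto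
      then have x2p: "x2 \<ge> 0" using sgn by auto
      have hp: "p (k-1) = 0" using k0' by (simp add: p_def supp)
      have A: "LA x1 x2 x3 (Suc n) (k+2) * t k * (p (k+1) * t (k+1) - p k * t (k+2)) \<ge> 0"
      proof (cases "k = int m")
        case True then show ?thesis using F4m by simp
      next
        case False
        then have "LA x1 x2 x3 (Suc n) (k+2) > 0" using HA[of "k+2" "Suc n"] k0 km by (simp add: n_def)
        then show ?thesis using F4[OF k0 km] pn by simp
      qed
      have coef: "- y2 * LA x1 x2 x3 n k + LA x1 x2 x3 (Suc n) (k+1) * LA y1 y2 y3 n (k+1)
          = (x2 * LA y1 y2 y3 n 1 - y2 * LA x1 x2 x3 n 0) + LA x1 x2 x3 (Suc n) 0 * LA y1 y2 y3 n 1"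
        using k0' unfolding LA_def by (simp add: algebra_simps)
      have "LA x1 x2 x3 (Suc n) 0 > 0" using HA[of 0 "Suc n"] by simp
      moreover have "LA y1 y2 y3 n 1 > 0" using HB[of 1 n] by (simp add: n_def)
      ultimately have coefpos: "- y2 * LA x1 x2 x3 n k + LA x1 x2 x3 (Suc n) (k+1) * LA y1 y2 y3 n (k+1) \<ge> 0"
        using coef condn by (simp add: add_nonneg_nonneg)
      have "(x1+x2) * x2 * p (k+1) \<ge> 0" using hx12 x2p pn by simp
      then have R: "LA x1 x2 x3 (Suc n) (k+2) * t k * (p (k+1) * t (k+1) - p k * t (k+2))
        + t (k+1) * p k * ((- y2 * LA x1 x2 x3 n k + LA x1 x2 x3 (Suc n) (k+1) * LA y1 y2 y3 n (k+1)) * p k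
        + (x1+x2) * x2 * p (k+1)) \<ge> 0" using A coefpos pn by simp
      show ?thesis
        using mult_pos_nonneg_cancel[OF ident4[OF ht hs hp] R ppos[OF k0 km]] .
    qed
    show ?case
    proof (intro allI impI conjI)
      fix k :: int assume "0 \<le> k" "k + 1 \<le> int (Suc m)"
      then have k0: "0 \<le> k" and km: "k \<le> int m" by auto
      show "Phi (Suc m) k \<ge> 0" using C1[OF k0 km] unfolding Phi_def t_def s_def by simp
      show "Xi (Suc m) k \<ge> 0" using C2[OF k0 km] unfolding Xi_def t_def s_def by simp
    qed
  qed
  have consm: "Phi m k \<ge> 0 \<and> Xi m k \<ge> 0" if "0 \<le> k" "k + 1 \<le> int m" for k
    using cons[of m] that by blast
  have T1: "S m J * S (Suc m) I \<le> S m I * S (Suc m) J"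
  proof (cases "I < 0")
    case True then have "S m I = 0" "S (Suc m) I = 0" by (simp_all add: supp)
    then show ?thesis by simp
  next
    case False
    show ?thesis
    proof (cases "J > int m")
      case True then have "S m J = 0" by (simp add: supp)
      then show ?thesis using nn by (simp add: mult_nonneg_nonneg)
    next
      case False2: False
      define f where "f k = S (Suc m) k / S m k" for k
      have st: "f k \<le> f (k+1)" if "0 \<le> k" "k+1 \<le> int m" for k
      proof -
        have "Phi m k \<ge> 0" using consm that by blast
        hence "S m (k+1) * S (Suc m) k \<le> S m k * S (Suc m) (k+1)" by (simp add: Phi_def)
        moreover have "S m k > 0" "S m (k+1) > 0" using pos that by auto
        ultimately show ?thesis unfolding f_def by (simp add: field_simps mult.commute)
      qed
      have "f I \<le> f J" using chain_mono[of 0 "int m" f I J, OF st] False False2 IJ by simp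
      moreover have "S m I > 0" "S m J > 0" using pos False False2 IJ by auto
      ultimately show ?thesis unfolding f_def by (simp add: field_simps mult.commute)
    qed
  qed
  have T2: "S m I * S (Suc m) (J+1) \<le> S m J * S (Suc m) (I+1)"
  proof (cases "I < 0")
    case True then have "S m I = 0" by (simp_all add: supp)
    then show ?thesis using nn by (simp add: mult_nonneg_nonneg)
  next
    case False
    show ?thesis
    proof (cases "J > int m")
      case True then have "S m J = 0" "S (Suc m) (J+1) = 0" by (simp_all add: supp)
      then show ?thesis by simp
    next
      case False2: False
      define f where "f k = - (S (Suc m) (k+1) / S m k)" for k
      have st: "f k \<le> f (k+1)" if "0 \<le> k" "k+1 \<le> int m" for k
      proof -
        have "Xi m k \<ge> 0" using consm that by blast
        hence "S m k * S (Suc m) (k+2) \<le> S m (k+1) * S (Suc m) (k+1)" by (simp add: Xi_def)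
        moreover have "S m k > 0" "S m (k+1) > 0" using pos that by auto
        moreover have "k + 1 + 1 = k + 2" by simp
        ultimately show ?thesis unfolding f_def by (simp add: field_simps mult.commute)
      qed
      have "f I \<le> f J" using chain_mono[of 0 "int m" f I J, OF st] False False2 IJ by simp
      moreover have "S m I > 0" "S m J > 0" using pos False False2 IJ by auto
      ultimately show ?thesis unfolding f_def by (simp add: field_simps mult.commute)
    qed
  qed
  show ?thesis using T1 T2 by simp
qed

fun Tp :: "real \<Rightarrow> real \<Rightarrow> real \<Rightarrow> real \<Rightarrow> real \<Rightarrow> real \<Rightarrow> real \<Rightarrow> nat \<Rightarrow> int \<Rightarrow> real" where
  "Tp x1 x2 x3 y1 y2 y3 c 0 k = (if k = 0 then c else 0)"
| "Tp x1 x2 x3 y1 y2 y3 c (Suc n) k = LA x1 x2 x3 (Suc n) k * Tp x1 x2 x3 y1 y2 y3 c n k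
     + LA y1 y2 y3 (Suc n) k * Tp x1 x2 x3 y1 y2 y3 c n (k-1)"

lemma LA_tendsto:
  "((\<lambda>e. LA x1 x2 (x3 + l*e) n k) \<longlongrightarrow> LA x1 x2 x3 n k) (at_right (0::real))"
proof -
  have "((\<lambda>e. x1 * real n + x2 * real_of_int k + (x3 + l*e)) \<longlongrightarrow> x1 * real n + x2 * real_of_int k + (x3 + l*0)) (at_right (0::real))"
    by (intro tendsto_intros)
  then show ?thesis unfolding LA_def by simp
qed

lemma Tp_tendsto:
  "((\<lambda>e. Tp x1 x2 (x3 + l*e) y1 y2 (y3 + u*e) (c + e) n k) \<longlongrightarrow> Tp x1 x2 x3 y1 y2 y3 c n k) (at_right (0::real))"
proof (induction n arbitrary: k)
  case 0
  have "((\<lambda>e. c + e) \<longlongrightarrow> c + 0) (at_right (0::real))" by (intro tendsto_intros)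
  then show ?case by simp
next
  case (Suc n)
  show ?case
    by (simp only: Tp.simps) (intro tendsto_intros LA_tendsto Suc.IH)
qed

lemma slope_nonneg:
  fixes \<alpha> \<beta> :: real
  assumes h: "\<And>n::nat. n \<ge> 1 \<Longrightarrow> 0 \<le> \<alpha> * real n + \<beta>"
  shows "0 \<le> \<alpha>"
proof (rule ccontr)
  assume "\<not> 0 \<le> \<alpha>"
  hence a: "\<alpha> < 0" by simp
  obtain N :: nat where N: "real N > max 1 (\<beta> / (- \<alpha>))" using reals_Archimedean2 by blast
  hence N1: "N \<ge> 1" by simp
  have "\<beta> / (- \<alpha>) < real N" using N by simp
  moreover have "0 < - \<alpha>" using a by simp
  ultimately have "\<beta> < real N * (- \<alpha>)" using pos_divide_less_eq by blast
  hence "\<alpha> * real N + \<beta> < 0" by (simp add: algebra_simps)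
  with h[OF N1] show False by simp
qed

lemma TP_T:
  fixes a1 a2 a3 b1 b2 b3 :: real
    and T :: "nat \<Rightarrow> int \<Rightarrow> real"
  assumes nonneg: "\<And>n k. T n k \<ge> 0"
    and T00: "T 0 0 \<ge> 0"
    and supp: "\<And>n k. \<not> (0 \<le> k \<and> k \<le> int n) \<Longrightarrow> T n k = 0"
    and rec: "\<And>n k. n \<ge> 1 \<Longrightarrow>
       T n k = (a1 * real n + a2 * real_of_int k + a3) * T (n - 1) k
             + (b1 * real n + b2 * real_of_int k + b3) * T (n - 1) (k - 1)"
    and a_nonneg: "\<And>n k. 0 \<le> k \<Longrightarrow> k < int n \<Longrightarrow>
       a1 * real n + a2 * real_of_int k + a3 \<ge> 0"
    and b_nonneg: "\<And>n k. 0 < k \<Longrightarrow> k \<le> int n \<Longrightarrow>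
       b1 * real n + b2 * real_of_int k + b3 \<ge> 0"
    and cond: "\<And>n k. n \<ge> 1 \<Longrightarrow> 0 < k \<Longrightarrow> k \<le> int n \<Longrightarrow>
       (a2 * b1 - a1 * b2) * real n + a2 * b2 * real_of_int k + (a2 * b3 - a3 * b2) \<ge> 0"
    and IJ: "I < J"
  shows "T m J * T (Suc m) I \<le> T m I * T (Suc m) J \<and> T m I * T (Suc m) (J+1) \<le> T m J * T (Suc m) (I+1)"
proof -
  have ha1: "a1 \<ge> 0"
    by (rule slope_nonneg[of a1 a3]) (use a_nonneg[of 0] in simp)
  have ha12: "a1 + a2 \<ge> 0"
  proof (rule slope_nonneg[of "a1+a2" "a3 - a2"])
    fix n :: nat assume "n \<ge> 1"
    then have "a1 * real n + a2 * real_of_int (int n - 1) + a3 \<ge> 0" using a_nonneg[of "int n - 1" n] by simp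
    then show "0 \<le> (a1 + a2) * real n + (a3 - a2)" by (simp add: algebra_simps)
  qed
  have hb1: "b1 \<ge> 0"
  proof (rule slope_nonneg[of b1 "b2 + b3"])
    fix n :: nat assume "n \<ge> 1"
    then have "b1 * real n + b2 * real_of_int 1 + b3 \<ge> 0" using b_nonneg[of 1 n] by simp
    then show "0 \<le> b1 * real n + (b2 + b3)" by (simp add: algebra_simps)
  qed
  have hb12: "b1 + b2 \<ge> 0"
  proof (rule slope_nonneg[of "b1+b2" "b3"])
    fix n :: nat assume "n \<ge> 1"
    then have "b1 * real n + b2 * real_of_int (int n) + b3 \<ge> 0" using b_nonneg[of "int n" n] by simp
    then show "0 \<le> (b1 + b2) * real n + b3" by (simp add: algebra_simps)
  qed
  have cond1: "a2 * LA b1 b2 b3 n 1 - b2 * LA a1 a2 a3 n 0 \<ge> 0" if "n \<ge> 1" for n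
    using cond[of n 1] that unfolding LA_def by (simp add: algebra_simps)
  have slope2: "a2 * b1 - a1 * b2 + a2 * b2 \<ge> 0"
  proof (rule slope_nonneg[of _ "a2 * b3 - a3 * b2"])
    fix n :: nat assume "n \<ge> 1"
    then have "(a2 * b1 - a1 * b2) * real n + a2 * b2 * real_of_int (int n) + (a2 * b3 - a3 * b2) \<ge> 0"
      using cond[of n "int n"] by simp
    then show "0 \<le> (a2 * b1 - a1 * b2 + a2 * b2) * real n + (a2 * b3 - a3 * b2)" by (simp add: algebra_simps)
  qed
  have sgn: "\<not> (a2 < 0 \<and> b2 > 0)"
  proof
    assume h: "a2 < 0 \<and> b2 > 0"
    have "a2 * (b1 + b2) \<le> 0" using h hb12 by (simp add: mult_nonpos_nonneg)
    moreover have "a1 * b2 \<ge> 0" using h ha1 by simp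
    moreover have "a1 * b2 \<le> a2 * (b1 + b2)" using slope2 by (simp add: algebra_simps)
    ultimately have "a1 * b2 = 0" by linarith
    then have "a1 = 0" using h by simp
    then show False using h ha12 by simp
  qed
  have Teq: "T n k = Tp a1 a2 a3 b1 b2 b3 (T 0 0) n k" for n k
  proof (induction n arbitrary: k)
    case 0 then show ?case using supp[of k 0] by auto
  next
    case (Suc n)
    show ?case using rec[of "Suc n" k] Suc.IH by (simp add: LA_def)
  qed
  show ?thesis
  proof (cases "a2 = 0 \<and> b2 > 0")
    case D1: True
    have A0: "a1 * real n + a2 * real_of_int k + a3 = 0" if "n \<ge> 1" for n k
    proof -
      have "a2 * LA b1 b2 b3 n 1 - b2 * LA a1 a2 a3 n 0 \<ge> 0" using cond1 that .
      then have "b2 * (a1 * real n + a3) \<le> 0" using D1 unfolding LA_def by simp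
      then have "a1 * real n + a3 \<le> 0" using D1 by (simp add: mult_le_0_iff)
      moreover have "a1 * real n + a3 \<ge> 0" using a_nonneg[of 0 n] that by simp
      ultimately show ?thesis using D1 by simp
    qed
    have Z: "T n k = 0" if "k \<noteq> int n" for n k
      using that
    proof (induction n arbitrary: k)
      case 0 then show ?case using supp by simp
    next
      case (Suc n)
      have "T n (k-1) = 0" using Suc by simp
      then show ?case using rec[of "Suc n" k] A0[of "Suc n" k] by simp
    qed
    have r1: "T m J * T (Suc m) I = 0"
    proof (cases "J = int m")
      case True then have "I \<noteq> int (Suc m)" using IJ by simp
      then show ?thesis using Z by simp
    next
      case False then show ?thesis using Z by simp
    qed
    have r2: "T m I * T (Suc m) (J+1) = 0"
    proof (cases "I = int m")
      case True then have "J + 1 \<noteq> int (Suc m)" using IJ by simp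
      then show ?thesis using Z by simp
    next
      case False then show ?thesis using Z by simp
    qed
    have "0 \<le> T m I * T (Suc m) J" "0 \<le> T m J * T (Suc m) (I+1)"
        by (intro mult_nonneg_nonneg nonneg)+
      then show ?thesis using r1 r2 by linarith
  next
    case ND1: False
    show ?thesis
    proof (cases "a2 < 0 \<and> b2 = 0")
      case D2: True
      have B0: "b1 * real n + b2 * real_of_int k + b3 = 0" if "n \<ge> 1" for n k
      proof -
        have "a2 * LA b1 b2 b3 n 1 - b2 * LA a1 a2 a3 n 0 \<ge> 0" using cond1 that .
        then have "a2 * (b1 * real n + b3) \<ge> 0" using D2 unfolding LA_def by simp
        then have "b1 * real n + b3 \<le> 0" using D2 by (simp add: zero_le_mult_iff)
        moreover have "b1 * real n + b3 \<ge> 0" using b_nonneg[of 1 n] that D2 by simp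
        ultimately show ?thesis using D2 by simp
      qed
      have Z: "T n k = 0" if "k \<noteq> 0" for n k
        using that
      proof (induction n arbitrary: k)
        case 0 then show ?case using supp by simp
      next
        case (Suc n)
        have "T n k = 0" using Suc by simp
        then show ?case using rec[of "Suc n" k] B0[of "Suc n" k] by simp
      qed
      have r1: "T m J * T (Suc m) I = 0"
        using Z IJ by (cases "J = 0") auto
      have r2: "T m I * T (Suc m) (J+1) = 0"
        using Z IJ by (cases "I = 0") auto
      have "0 \<le> T m I * T (Suc m) J" "0 \<le> T m J * T (Suc m) (I+1)"
        by (intro mult_nonneg_nonneg nonneg)+
      then show ?thesis using r1 r2 by linarith
    next
      case ND2: False
      obtain l u :: real where lu: "l > 0" "u > 0" "a2 * u - b2 * l \<ge> 0"
      proof (cases "a2 \<ge> 0 \<and> b2 \<le> 0")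
        case True then show ?thesis using that[of 1 1] by simp
      next
        case False
        then have "(a2 > 0 \<and> b2 > 0) \<or> (a2 < 0 \<and> b2 < 0)" using ND1 ND2 sgn by auto
        then show ?thesis
        proof
          assume h: "a2 > 0 \<and> b2 > 0"
          then show ?thesis using that[of a2 b2] by (simp add: mult.commute)
        next
          assume h: "a2 < 0 \<and> b2 < 0"
          then show ?thesis using that[of "-a2" "-b2"] by (simp add: mult.commute)
        qed
      qed
      define F where "F e = Tp a1 a2 (a3 + l*e) b1 b2 (b3 + u*e) (T 0 0 + e)" for e
      have strict: "F e m J * F e (Suc m) I \<le> F e m I * F e (Suc m) J \<and>
          F e m I * F e (Suc m) (J+1) \<le> F e m J * F e (Suc m) (I+1)" if e0: "e > 0" for e
      proof -
        have "F e m I * F e (Suc m) J \<ge> F e m J * F e (Suc m) I \<and>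
          F e m J * F e (Suc m) (I+1) \<ge> F e m I * F e (Suc m) (J+1)"
          unfolding F_def
        proof (rule strict_TP[where ?x1.0=a1 and ?x2.0=a2 and ?x3.0="a3 + l*e" and ?y1.0=b1 and ?y2.0=b2 and ?y3.0="b3+u*e" and c="T 0 0 + e"])
          show "T 0 0 + e > 0" using T00 e0 by simp
          show "\<And>k. Tp a1 a2 (a3 + l * e) b1 b2 (b3 + u * e) (T 0 0 + e) 0 k = (if k = 0 then T 0 0 + e else 0)"
            by simp
          show "\<And>n k. Tp a1 a2 (a3 + l * e) b1 b2 (b3 + u * e) (T 0 0 + e) (Suc n) k =
            LA a1 a2 (a3 + l * e) (Suc n) k * Tp a1 a2 (a3 + l * e) b1 b2 (b3 + u * e) (T 0 0 + e) n k +
            LA b1 b2 (b3 + u * e) (Suc n) k * Tp a1 a2 (a3 + l * e) b1 b2 (b3 + u * e) (T 0 0 + e) n (k - 1)"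
            by simp
          show "\<And>n k. 0 \<le> k \<Longrightarrow> k < int n \<Longrightarrow> 0 < LA a1 a2 (a3 + l * e) n k"
          proof -
            fix n k assume "0 \<le> (k::int)" "k < int n"
            then have "a1 * real n + a2 * real_of_int k + a3 \<ge> 0" using a_nonneg by blast
            moreover have "l * e > 0" using lu e0 by simp
            ultimately show "0 < LA a1 a2 (a3 + l * e) n k" unfolding LA_def by linarith
          qed
          show "\<And>n k. 0 < k \<Longrightarrow> k \<le> int n \<Longrightarrow> 0 < LA b1 b2 (b3 + u * e) n k"
          proof -
            fix n k assume "0 < (k::int)" "k \<le> int n"
            then have "b1 * real n + b2 * real_of_int k + b3 \<ge> 0" using b_nonneg by blast
            moreover have "u * e > 0" using lu e0 by simp
            ultimately show "0 < LA b1 b2 (b3 + u * e) n k" unfolding LA_def by linarith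
          qed
          show "a1 \<ge> 0" "b1 \<ge> 0" "a1 + a2 \<ge> 0" "b1 + b2 \<ge> 0" "\<not> (a2 < 0 \<and> b2 > 0)"
            using ha1 hb1 ha12 hb12 sgn by auto
          show "\<And>n. 1 \<le> n \<Longrightarrow> 0 \<le> a2 * LA b1 b2 (b3 + u * e) n 1 - b2 * LA a1 a2 (a3 + l * e) n 0"
          proof -
            fix n :: nat assume "1 \<le> n"
            then have "a2 * LA b1 b2 b3 n 1 - b2 * LA a1 a2 a3 n 0 \<ge> 0" using cond1 by blast
            moreover have "e * (a2 * u - b2 * l) \<ge> 0" using lu e0 by simp
            moreover have "a2 * LA b1 b2 (b3 + u * e) n 1 - b2 * LA a1 a2 (a3 + l * e) n 0
              = (a2 * LA b1 b2 b3 n 1 - b2 * LA a1 a2 a3 n 0) + e * (a2 * u - b2 * l)"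
              unfolding LA_def by (simp add: algebra_simps)
            ultimately show "0 \<le> a2 * LA b1 b2 (b3 + u * e) n 1 - b2 * LA a1 a2 (a3 + l * e) n 0" by simp
          qed
          show "I < J" using IJ .
        qed
        then show ?thesis by simp
      qed
      have lim: "((\<lambda>e. F e n k) \<longlongrightarrow> T n k) (at_right 0)" for n k
      proof -
        have "((\<lambda>e. Tp a1 a2 (a3 + l*e) b1 b2 (b3 + u*e) (T 0 0 + e) n k) \<longlongrightarrow> Tp a1 a2 a3 b1 b2 b3 (T 0 0) n k) (at_right 0)"
          by (rule Tp_tendsto)
        then show ?thesis by (simp only: F_def Teq[symmetric])
      qed
      have ev: "eventually (\<lambda>e. e > 0) (at_right (0::real))"
        by (rule eventually_at_rightI[of 0 1]) auto
      have ev1: "eventually (\<lambda>e. F e m J * F e (Suc m) I \<le> F e m I * F e (Suc m) J) (at_right 0)"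
        using ev by (rule eventually_mono) (use strict in blast)
      have ev2: "eventually (\<lambda>e. F e m I * F e (Suc m) (J+1) \<le> F e m J * F e (Suc m) (I+1)) (at_right 0)"
        using ev by (rule eventually_mono) (use strict in blast)
      have L1: "T m J * T (Suc m) I \<le> T m I * T (Suc m) J"
        by (rule tendsto_le[OF trivial_limit_at_right_real
              tendsto_mult[OF lim lim] tendsto_mult[OF lim lim] ev1])
      have L2: "T m I * T (Suc m) (J+1) \<le> T m J * T (Suc m) (I+1)"
        by (rule tendsto_le[OF trivial_limit_at_right_real
              tendsto_mult[OF lim lim] tendsto_mult[OF lim lim] ev2])
      show ?thesis using L1 L2 by simp
    qed
  qed
qed

lemma X_nonneg:
  fixes p t :: "int \<Rightarrow> real"
  assumes T1: "\<And>I J. I < J \<Longrightarrow> p J * t I \<le> p I * t J"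
  shows "0 \<le> (\<Sum>i\<le>M. p (int i) * t (int M - int i) * (real M - 2 * real i))"
proof -
  define f where "f i = p (int i) * t (int M - int i) * (real M - 2 * real i)" for i
  have refl: "(\<Sum>i\<le>M. f i) = (\<Sum>i\<le>M. f (M - i))"
    by (rule sum.reindex_bij_witness[where i="\<lambda>i. M - i" and j="\<lambda>i. M - i"]) auto
  have "0 \<le> (\<Sum>i\<le>M. f i + f (M - i))"
  proof (rule sum_nonneg)
    fix i assume "i \<in> {..M}" hence iM: "i \<le> M" by simp
    have e: "f i + f (M - i) = (real M - 2 * real i) * (p (int i) * t (int M - int i) - p (int M - int i) * t (int i))"
      using iM unfolding f_def by (simp add: of_nat_diff algebra_simps)
    consider "2 * i < M" | "2 * i > M" | "2 * i = M" by linarith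
    then show "0 \<le> f i + f (M - i)"
    proof cases
      case 1
      then have "p (int M - int i) * t (int i) \<le> p (int i) * t (int M - int i)" using T1 by simp
      moreover have "real M - 2 * real i > 0" using 1 by linarith
      ultimately show ?thesis unfolding e by simp
    next
      case 2
      then have "p (int i) * t (int M - int i) \<le> p (int M - int i) * t (int i)"
        using T1[of "int M - int i" "int i"] by simp
      moreover have "real M - 2 * real i < 0" using 2 by linarith
      ultimately show ?thesis unfolding e by (simp add: mult_nonpos_nonpos)
    next
      case 3
      then have "real M - 2 * real i = 0" by linarith
      then show ?thesis unfolding e by simp
    qed
  qed
  also have "(\<Sum>i\<le>M. f i + f (M - i)) = 2 * (\<Sum>i\<le>M. f i)"
    using refl by (simp add: sum.distrib)
  finally show ?thesis unfolding f_def by simp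
qed

lemma Y_nonneg:
  fixes p t :: "int \<Rightarrow> real"
  assumes T2: "\<And>I J. I < J \<Longrightarrow> p I * t (J+1) \<le> p J * t (I+1)"
    and nn: "\<And>k. p k \<ge> 0" "\<And>k. t k \<ge> 0"
  shows "0 \<le> (\<Sum>i\<le>M. p (int i) * t (int M - int i) * (2 * real i + 1 - real M))"
proof -
  define f where "f i = p (int i) * t (int M - int i) * (2 * real i + 1 - real M)" for i
  have split: "(\<Sum>i\<le>M. f i) = (\<Sum>i<M. f i) + f M"
    by (simp add: lessThan_Suc_atMost[symmetric])
  have fM: "f M \<ge> 0" unfolding f_def using nn by simp
  have refl: "(\<Sum>i<M. f i) = (\<Sum>i<M. f (M - Suc i))"
    using sum.nat_diff_reindex[of f M] by simp
  have "0 \<le> (\<Sum>i<M. f i + f (M - Suc i))"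
  proof (rule sum_nonneg)
    fix i assume "i \<in> {..<M}" hence iM: "i < M" by simp
    have e: "f i + f (M - Suc i) = (real M - 1 - 2 * real i) *
        (p (int M - 1 - int i) * t (int i + 1) - p (int i) * t (int M - int i))"
      using iM unfolding f_def by (simp add: of_nat_diff algebra_simps)
    consider "2 * i + 1 < M" | "2 * i + 1 > M" | "2 * i + 1 = M" by linarith
    then show "0 \<le> f i + f (M - Suc i)"
    proof cases
      case 1
      then have "p (int i) * t (int M - 1 - int i + 1) \<le> p (int M - 1 - int i) * t (int i + 1)"
        using T2[of "int i" "int M - 1 - int i"] by simp
      moreover have "real M - 1 - 2 * real i > 0" using 1 by linarith
      ultimately show ?thesis unfolding e by simp
    next
      case 2
      then have "p (int M - 1 - int i) * t (int i + 1) \<le> p (int i) * t (int M - 1 - int i + 1)"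
        using T2[of "int M - 1 - int i" "int i"] by simp
      moreover have "real M - 1 - 2 * real i < 0" using 2 by linarith
      ultimately show ?thesis unfolding e by (simp add: mult_nonpos_nonpos)
    next
      case 3
      then have "real M - 1 - 2 * real i = 0" by linarith
      then show ?thesis unfolding e by simp
    qed
  qed
  also have "(\<Sum>i<M. f i + f (M - Suc i)) = 2 * (\<Sum>i<M. f i)"
    using refl by (simp add: sum.distrib)
  finally show ?thesis unfolding f_def[symmetric] using split fM by simp
qed

lemma D_nonneg:
  fixes p t s :: "int \<Rightarrow> real" and a1 a2 a3 b1 b2 b3 :: real and r m :: nat
  assumes ht: "\<And>k. t k = (a1 * real (Suc r) + a2 * real_of_int k + a3) * p k
                 + (b1 * real (Suc r) + b2 * real_of_int k + b3) * p (k - 1)"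
    and hs: "\<And>k. s k = (a1 * real (Suc (Suc r)) + a2 * real_of_int k + a3) * t k
                 + (b1 * real (Suc (Suc r)) + b2 * real_of_int k + b3) * t (k - 1)"
    and pm: "p (-1) = 0" and tm: "t (-1) = 0"
    and T1: "\<And>I J. I < J \<Longrightarrow> p J * t I \<le> p I * t J"
    and T2: "\<And>I J. I < J \<Longrightarrow> p I * t (J+1) \<le> p J * t (I+1)"
    and nn: "\<And>k. p k \<ge> 0" "\<And>k. t k \<ge> 0"
    and ha1: "a1 \<ge> 0" and hb1: "b1 \<ge> 0" and ha12: "a1 + a2 \<ge> 0" and hb12: "b1 + b2 \<ge> 0"
  shows "0 \<le> (\<Sum>i\<le>m. p (int i) * s (int m - int i)) - (\<Sum>i\<le>m. t (int i) * t (int m - int i))"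
proof -
  define Z where "Z M = (\<Sum>i\<le>M. p (int i) * t (int M - int i))" for M
  define X where "X M = (\<Sum>i\<le>M. p (int i) * t (int M - int i) * (real M - 2 * real i))" for M
  define Y where "Y M = (\<Sum>i\<le>M. p (int i) * t (int M - int i) * (2 * real i + 1 - real M))" for M
  have ZXY: "Z M = X M + Y M" for M
    unfolding Z_def X_def Y_def sum.distrib[symmetric] by (rule sum.cong) (simp_all add: algebra_simps)
  have Z0: "Z M \<ge> 0" for M unfolding Z_def using nn by (simp add: sum_nonneg)
  have X0: "X M \<ge> 0" for M unfolding X_def using X_nonneg[of p t M] T1 by blast
  have Y0: "Y M \<ge> 0" for M unfolding Y_def using Y_nonneg[of p t M] T2 nn by blast
  have comb: "0 \<le> \<alpha> * Z M + \<beta> * X M" if "\<alpha> \<ge> 0" "\<alpha> + \<beta> \<ge> 0" for \<alpha> \<beta> M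
  proof (cases "\<beta> \<ge> 0")
    case True then show ?thesis using that Z0[of M] X0[of M] by simp
  next
    case False
    have "\<alpha> * Z M + \<beta> * X M = (\<alpha> + \<beta>) * Z M + (- \<beta>) * Y M" using ZXY[of M] by (simp add: algebra_simps)
    also have "\<dots> \<ge> 0"
    proof -
      have "0 \<le> - \<beta>" using False by linarith
      then have "0 \<le> (- \<beta>) * Y M" using Y0[of M] by (rule mult_nonneg_nonneg)
      moreover have "0 \<le> (\<alpha> + \<beta>) * Z M" using that(2) Z0[of M] by (rule mult_nonneg_nonneg)
      ultimately show ?thesis by linarith
    qed
    finally show ?thesis .
  qed
  define Bp where "Bp k = b1 * real (Suc (Suc r)) + b2 * real_of_int k + b3" for k
  define Bn where "Bn k = b1 * real (Suc r) + b2 * real_of_int k + b3" for k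
  define E1 where "E1 i = p (int i) * Bp (int m - int i) * t (int m - int i - 1)" for i
  define E2 where "E2 i = t (int m - int i) * Bn (int i) * p (int i - 1)" for i
  have tmeq: "p (int i) * s (int m - int i) - t (int i) * t (int m - int i)
     = a1 * (p (int i) * t (int m - int i)) + a2 * (p (int i) * t (int m - int i) * (real m - 2 * real i))
       + (E1 i - E2 i)" for i
    unfolding E1_def E2_def Bp_def Bn_def hs[of "int m - int i"] ht[of "int i"]
    by (simp add: algebra_simps)
  have D1: "(\<Sum>i\<le>m. p (int i) * s (int m - int i)) - (\<Sum>i\<le>m. t (int i) * t (int m - int i))
      = a1 * Z m + a2 * X m + ((\<Sum>i\<le>m. E1 i) - (\<Sum>i\<le>m. E2 i))"
    unfolding sum_subtractf[symmetric] tmeq Z_def X_def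
    by (simp add: sum.distrib sum_distrib_left sum_subtractf)
  have E: "(\<Sum>i\<le>m. E1 i) - (\<Sum>i\<le>m. E2 i) = (if m = 0 then 0 else b1 * Z (m - 1) + b2 * X (m - 1))"
  proof (cases m)
    case 0
    then show ?thesis unfolding E1_def E2_def using pm tm by simp
  next
    case (Suc m')
    have e1: "(\<Sum>i\<le>m. E1 i) = (\<Sum>i\<le>m'. E1 i)"
      using Suc tm by (simp add: E1_def)
    have e2: "(\<Sum>i\<le>m. E2 i) = (\<Sum>i\<le>m'. E2 (Suc i))"
      using Suc pm by (simp add: E2_def sum.atMost_Suc_shift del: sum.atMost_Suc)
    have "(\<Sum>i\<le>m'. E1 i) - (\<Sum>i\<le>m'. E2 (Suc i))
        = (\<Sum>i\<le>m'. b1 * (p (int i) * t (int m' - int i)) + b2 * (p (int i) * t (int m' - int i) * (real m' - 2 * real i)))"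
      unfolding sum_subtractf[symmetric]
    proof (rule sum.cong)
      fix i assume "i \<in> {..m'}"
      have a: "int m - int i - 1 = int m' - int i" "int m - int (Suc i) = int m' - int i" "int (Suc i) - 1 = int i"
        using Suc by auto
      show "E1 i - E2 (Suc i) = b1 * (p (int i) * t (int m' - int i)) + b2 * (p (int i) * t (int m' - int i) * (real m' - 2 * real i))"
        unfolding E1_def E2_def a Bp_def Bn_def using Suc by (simp add: algebra_simps)
    qed simp
    also have "\<dots> = b1 * Z m' + b2 * X m'"
      unfolding Z_def X_def by (simp add: sum.distrib sum_distrib_left)
    finally show ?thesis using e1 e2 Suc by simp
  qed
  have "0 \<le> a1 * Z m + a2 * X m" using comb ha1 ha12 by blast
  moreover have "0 \<le> (if m = 0 then 0 else b1 * Z (m - 1) + b2 * X (m - 1))" using comb hb1 hb12 by simp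
  ultimately show ?thesis unfolding D1 E by simp
qed

lemma coeff_row_poly:
  assumes supp: "\<And>n k. \<not> (0 \<le> k \<and> k \<le> int n) \<Longrightarrow> T n k = 0"
  shows "coeff (row_poly T n) i = T n (int i)"
proof -
  have "coeff (row_poly T n) i = (\<Sum>k\<le>n. if k = i then T n (int k) else 0)"
    unfolding row_poly_def coeff_sum by simp
  also have "\<dots> = (if i \<le> n then T n (int i) else 0)"
    by (simp add: sum.delta'[of "{..n}"] eq_commute)
  also have "\<dots> = T n (int i)" using supp[of "int i" n] by auto
  finally show ?thesis .
qed

theorem theorem4p1:
  fixes a1 a2 a3 b1 b2 b3 :: real
    and T :: "nat \<Rightarrow> int \<Rightarrow> real"
  assumes nonneg: "\<And>n k. T n k \<ge> 0"
    and T00: "T 0 0 \<ge> 0"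
    and supp: "\<And>n k. \<not> (0 \<le> k \<and> k \<le> int n) \<Longrightarrow> T n k = 0"
    and rec: "\<And>n k. n \<ge> 1 \<Longrightarrow>
       T n k = (a1 * real n + a2 * real_of_int k + a3) * T (n - 1) k
             + (b1 * real n + b2 * real_of_int k + b3) * T (n - 1) (k - 1)"
    and a_nonneg: "\<And>n k. 0 \<le> k \<Longrightarrow> k < int n \<Longrightarrow>
       a1 * real n + a2 * real_of_int k + a3 \<ge> 0"
    and b_nonneg: "\<And>n k. 0 < k \<Longrightarrow> k \<le> int n \<Longrightarrow>
       b1 * real n + b2 * real_of_int k + b3 \<ge> 0"
    and cond: "\<And>n k. n \<ge> 1 \<Longrightarrow> 0 < k \<Longrightarrow> k \<le> int n \<Longrightarrow>
       (a2 * b1 - a1 * b2) * real n + a2 * b2 * real_of_int k + (a2 * b3 - a3 * b2) \<ge> 0"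
  shows "q_log_convex (row_poly T)"
proof -
  have ha1: "a1 \<ge> 0"
    by (rule slope_nonneg[of a1 a3]) (use a_nonneg[of 0] in simp)
  have ha12: "a1 + a2 \<ge> 0"
  proof (rule slope_nonneg[of "a1+a2" "a3 - a2"])
    fix n :: nat assume "n \<ge> 1"
    then have "a1 * real n + a2 * real_of_int (int n - 1) + a3 \<ge> 0" using a_nonneg[of "int n - 1" n] by simp
    then show "0 \<le> (a1 + a2) * real n + (a3 - a2)" by (simp add: algebra_simps)
  qed
  have hb1: "b1 \<ge> 0"
  proof (rule slope_nonneg[of b1 "b2 + b3"])
    fix n :: nat assume "n \<ge> 1"
    then have "b1 * real n + b2 * real_of_int 1 + b3 \<ge> 0" using b_nonneg[of 1 n] by simp
    then show "0 \<le> b1 * real n + (b2 + b3)" by (simp add: algebra_simps)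
  qed
  have hb12: "b1 + b2 \<ge> 0"
  proof (rule slope_nonneg[of "b1+b2" "b3"])
    fix n :: nat assume "n \<ge> 1"
    then have "b1 * real n + b2 * real_of_int (int n) + b3 \<ge> 0" using b_nonneg[of "int n" n] by simp
    then show "0 \<le> (b1 + b2) * real n + b3" by (simp add: algebra_simps)
  qed
  have TP: "T m J * T (Suc m) I \<le> T m I * T (Suc m) J \<and> T m I * T (Suc m) (J+1) \<le> T m J * T (Suc m) (I+1)"
    if "I < J" for m I J
    using TP_T[OF nonneg T00 supp rec a_nonneg b_nonneg cond that] by blast
  have cf: "coeff (row_poly T n) i = T n (int i)" for n i using coeff_row_poly[OF supp] .
  show ?thesis
    unfolding q_log_convex_def q_le_def
  proof (intro allI impI)
    fix n m :: nat assume n1: "1 \<le> n"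
    then obtain r where nr: "n = Suc r" by (cases n) auto
    have ht: "\<And>k. T (Suc r) k = (a1 * real (Suc r) + a2 * real_of_int k + a3) * T r k
                 + (b1 * real (Suc r) + b2 * real_of_int k + b3) * T r (k - 1)"
      using rec[of "Suc r"] by simp
    have hs: "\<And>k. T (Suc (Suc r)) k = (a1 * real (Suc (Suc r)) + a2 * real_of_int k + a3) * T (Suc r) k
                 + (b1 * real (Suc (Suc r)) + b2 * real_of_int k + b3) * T (Suc r) (k - 1)"
      using rec[of "Suc (Suc r)"] by simp
    have D: "0 \<le> (\<Sum>i\<le>m. T r (int i) * T (Suc (Suc r)) (int m - int i)) - (\<Sum>i\<le>m. T (Suc r) (int i) * T (Suc r) (int m - int i))"
      by (rule D_nonneg[OF ht hs])
         (use supp TP nonneg ha1 hb1 ha12 hb12 in auto)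
    have "coeff (row_poly T (n - 1) * row_poly T (n + 1) - (row_poly T n)\<^sup>2) m
        = (\<Sum>i\<le>m. T r (int i) * T (Suc (Suc r)) (int m - int i)) - (\<Sum>i\<le>m. T (Suc r) (int i) * T (Suc r) (int m - int i))"
      unfolding nr power2_eq_square coeff_diff coeff_mult cf
      by (simp add: of_nat_diff)
    then show "0 \<le> coeff (row_poly T (n - 1) * row_poly T (n + 1) - (row_poly T n)\<^sup>2) m"
      using D by simp
  qed
qed

end
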